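(* ($I\Sigma_1$) If $X\subseteq\mathbb{N}$ is finite, $\omega^3$-large, and $\min X>3$, then $X$ is $\mathsf{fEM}_{<\infty}$-$\omega$-large.
   Context: $\alpha$-largeness for $\alpha<\omega^\omega$: writing ordinals in Cantor normal form, $0[m]=0$, $(\beta+1)[m]=\beta$, $(\beta+\omega^n)[m]=\beta+\omega^{n-1}\cdot m$ for $n\ge1$; a finite $\{x_0<\dots<x_{\ell-1}\}$ is $\alpha$-large if $\alpha[x_0]\cdots[x_{\ell-1}]=0$. A finite set $X$ is \emph{$\mathsf{fEM}_{<\infty}$-$\alpha$-large} if for every coloring $P:[X]^2\to\{0,\dots,\min X-1\}$ there is $Y\subseteq X$ which is $\alpha$-large and such that $P$ is fallow on $[Y]^2$, i.e. $P(x,z)\in\{P(x,y),P(y,z)\}$ for all $x<y<z$ in $Y$. *)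

theory Defs
  imports Main
begin

text \<open>Ordinals below omega^omega in Cantor normal form
  omega^e1 + ... + omega^ek (e1 >= ... >= ek), represented by the list [e1,...,ek]
  of exponents; the empty list is 0.\<close>

type_synonym ord_cnf = "nat list"

text \<open>Fundamental sequence: 0[m] = 0, (beta+1)[m] = beta,
  (beta + omega^n)[m] = beta + omega^(n-1) * m for n >= 1.\<close>
definition fund :: "ord_cnf \<Rightarrow> nat \<Rightarrow> ord_cnf" where
  "fund a m = (if a = [] then []
               else if last a = 0 then butlast a
               else butlast a @ replicate m (last a - 1))"

definition omega_pow :: "nat \<Rightarrow> ord_cnf" where
  "omega_pow n = [n]"

definition large :: "ord_cnf \<Rightarrow> nat set \<Rightarrow> bool" where
  "large a X \<longleftrightarrow> finite X \<and> foldl fund a (sorted_list_of_set X) = []"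

definition fallow_on :: "(nat \<Rightarrow> nat \<Rightarrow> nat) \<Rightarrow> nat set \<Rightarrow> bool" where
  "fallow_on P Y \<longleftrightarrow> (\<forall>x\<in>Y. \<forall>y\<in>Y. \<forall>z\<in>Y. x < y \<and> y < z \<longrightarrow>
       P x z = P x y \<or> P x z = P y z)"

definition fEM_large :: "ord_cnf \<Rightarrow> nat set \<Rightarrow> bool" where
  "fEM_large a X \<longleftrightarrow> finite X \<and>
     (\<forall>P :: nat \<Rightarrow> nat \<Rightarrow> nat.
        (\<forall>x\<in>X. \<forall>y\<in>X. x < y \<longrightarrow> P x y < Min X) \<longrightarrow>
        (\<exists>Y\<subseteq>X. large a Y \<and> fallow_on P Y))"

end

theory Submission
  imports Defs
begin

lemma fund_app: "b \<noteq> [] \<Longrightarrow> fund (a @ b) x = a @ fund b x"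
  by (simp add: fund_def butlast_append)

lemma foldl_fund_Nil: "foldl fund [] xs = []"
  by (induction xs) (auto simp: fund_def)

lemma fund_split:
  "foldl fund (a @ b) xs = [] \<Longrightarrow>
   \<exists>ys zs. xs = ys @ zs \<and> foldl fund b ys = [] \<and> foldl fund a zs = []"
proof (induction xs arbitrary: b)
  case Nil
  then show ?case by auto
next
  case (Cons x xs)
  show ?case
  proof (cases "b = []")
    case True
    then show ?thesis using Cons.prems by (intro exI[of _ "[]"] exI[of _ "x#xs"]) auto
  next
    case False
    then have "foldl fund (a @ fund b x) xs = []" using Cons.prems by (simp add: fund_app)
    from Cons.IH[OF this] obtain ys zs where "xs = ys @ zs" "foldl fund (fund b x) ys = []"
      "foldl fund a zs = []" by blast
    then show ?thesis by (intro exI[of _ "x#ys"] exI[of _ zs]) auto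
  qed
qed

lemma fund_Suc: "fund [Suc e] x = replicate x e"
  by (simp add: fund_def)

lemma W0: "foldl fund (replicate n 0) xs = [] \<Longrightarrow> n \<le> length xs"
proof (induction n arbitrary: xs)
  case 0
  then show ?case by simp
next
  case (Suc n)
  have "replicate (Suc n) (0::nat) = replicate n 0 @ [0]" by (simp add: replicate_append_same)
  with Suc.prems obtain ys zs where "xs = ys @ zs" "foldl fund [0] ys = []"
      "foldl fund (replicate n 0) zs = []" using fund_split by metis
  moreover then have "1 \<le> length ys" by (cases ys) auto
  ultimately show ?case using Suc.IH[of zs] by simp
qed

lemma W0': "n \<le> length xs \<Longrightarrow> foldl fund (replicate n 0) xs = []"
proof (induction xs arbitrary: n)
  case Nil
  then show ?case by simp
next
  case (Cons x xs)
  show ?case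
  proof (cases n)
    case 0
    have "fund (replicate n 0) x = []" using 0 by (simp add: fund_def)
    then show ?thesis by (simp add: foldl_fund_Nil)
  next
    case (Suc m)
    have "fund (replicate n 0) x = replicate m 0"
      using Suc by (simp add: fund_def flip: replicate_append_same)
    then show ?thesis using Cons Suc by simp
  qed
qed

lemma sorted_bound:
  "sorted_wrt (<) (ys @ zs) \<Longrightarrow> \<forall>y\<in>set (ys @ zs). m \<le> y \<Longrightarrow> z \<in> set zs \<Longrightarrow> m + length ys \<le> (z::nat)"
proof (induction ys arbitrary: m)
  case Nil
  then show ?case by simp
next
  case (Cons y ys)
  have "\<forall>u\<in>set (ys @ zs). Suc m \<le> u"
  proof
    fix u assume "u \<in> set (ys @ zs)"
    then have "y < u" "m \<le> y" using Cons.prems by auto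
    then show "Suc m \<le> u" by simp
  qed
  from Cons.IH[OF _ this] Cons.prems show ?case by auto
qed

lemma W1:
  assumes "foldl fund [1] xs = []" "\<forall>x\<in>set xs. m \<le> x"
  shows "m + 1 \<le> length xs"
proof (cases xs)
  case Nil
  then show ?thesis using assms by simp
next
  case (Cons x rest)
  then have "foldl fund (replicate x 0) rest = []" using assms fund_Suc[of 0 x] by simp
  then have "x \<le> length rest" by (rule W0)
  then show ?thesis using Cons assms by auto
qed

lemma arith1:
  assumes "(m::nat) + 1 \<le> l" "(P - 1) * (m + l + 1) \<le> r" "1 \<le> P"
  shows "(2 * P - 1) * (m + 1) \<le> l + r"
proof -
  obtain Q where Q: "P = Q + 1" using assms(3) by (metis add.commute le_Suc_ex)
  have "(2 * P - 1) * (m + 1) = Q * (m+1) + Q * (m+1) + (m+1)" using Q by (simp add: algebra_simps)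
  also have "\<dots> \<le> Q * (m+1) + Q * l + l" using assms(1) by (intro add_mono mult_le_mono) auto
  also have "\<dots> = Q * (m + l + 1) + l" by (simp add: algebra_simps)
  also have "\<dots> \<le> l + r" using assms(2) Q by simp
  finally show ?thesis .
qed

lemma Wn:
  "sorted_wrt (<) xs \<Longrightarrow> \<forall>x\<in>set xs. m \<le> x \<Longrightarrow> foldl fund (replicate n 1) xs = []
   \<Longrightarrow> (2^n - 1) * (m + 1) \<le> length xs"
proof (induction n arbitrary: xs m)
  case 0
  then show ?case by simp
next
  case (Suc n)
  have "replicate (Suc n) (1::nat) = replicate n 1 @ [1]" by (simp add: replicate_append_same)
  with Suc.prems obtain ys zs where yz: "xs = ys @ zs" "foldl fund [1] ys = []"
      "foldl fund (replicate n 1) zs = []" using fund_split by metis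
  have l: "m + 1 \<le> length ys" using W1[OF yz(2)] Suc.prems yz by auto
  have "\<forall>z\<in>set zs. m + length ys \<le> z" using sorted_bound Suc.prems yz by auto
  moreover have "sorted_wrt (<) zs" using Suc.prems yz by (simp add: sorted_wrt_append)
  ultimately have r: "(2^n - 1) * (m + length ys + 1) \<le> length zs"
    using Suc.IH yz(3) by blast
  have "(2 * 2^n - 1) * (m + 1) \<le> length ys + length zs"
    by (rule arith1[OF l r]) simp
  then show ?case using yz by simp
qed

lemma W2:
  assumes "sorted_wrt (<) xs" "\<forall>x\<in>set xs. m \<le> x" "foldl fund [2] xs = []"
  shows "2^m \<le> length xs"
proof (cases xs)
  case Nil
  then show ?thesis using assms by simp
next
  case (Cons x rest)
  then have f: "foldl fund (replicate x 1) rest = []" using assms fund_Suc[of 1 x]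
    by (simp add: numeral_2_eq_2)
  have "\<forall>y\<in>set rest. x \<le> y" using assms Cons by auto
  from Wn[OF _ this f] have "(2^x - 1) * (x + 1) \<le> length rest" using assms Cons by simp
  moreover have "2^x - 1 \<le> (2^x - 1) * (x + 1)" by simp
  ultimately have A: "2^x - 1 \<le> length rest" by (rule le_trans[rotated])
  have "(1::nat) \<le> 2^x" by simp
  with A have B: "2^x \<le> length xs" using Cons by simp
  have "(2::nat)^m \<le> 2^x" using assms Cons by simp
  with B show ?thesis by (rule le_trans[rotated])
qed

lemma W3:
  assumes "sorted_wrt (<) (k # rest)" "foldl fund [3] (k # rest) = []" "2 \<le> k"
  shows "2 ^ (2 ^ (k + 1)) \<le> length rest"
proof -
  have f: "foldl fund (replicate k 2) rest = []" using assms(2) fund_Suc[of 2 k]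
    by (simp add: numeral_3_eq_3)
  obtain j where j: "k = Suc (Suc j)" using assms(3) by (metis add_2_eq_Suc le_Suc_ex)
  have "replicate k (2::nat) = (replicate j 2 @ [2]) @ [2]"
    unfolding j by (simp flip: replicate_append_same)
  with f obtain ys r where yr: "rest = ys @ r" "foldl fund [2] ys = []"
      "foldl fund (replicate j 2 @ [2]) r = []" using fund_split by metis
  then obtain zs ws where zw: "r = zs @ ws" "foldl fund [2] zs = []" using fund_split by metis
  have s1: "sorted_wrt (<) rest" using assms(1) by simp
  have s2: "\<forall>y\<in>set rest. k + 1 \<le> y" using assms(1) by auto
  have "sorted_wrt (<) ys" "\<forall>y\<in>set ys. k + 1 \<le> y"
    using s1 s2 yr(1) by (simp_all add: sorted_wrt_append)
  from W2[OF this yr(2)] have A: "2 ^ (k+1) \<le> length ys" .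
  have B: "\<forall>z\<in>set zs. k + 1 + length ys \<le> z"
  proof
    fix z assume "z \<in> set zs"
    then show "k + 1 + length ys \<le> z"
      using sorted_bound[of ys "zs @ ws" "k+1" z] s1 s2 yr(1) zw(1) by simp
  qed
  have C: "\<forall>z\<in>set zs. 2 ^ (k+1) \<le> z"
  proof
    fix z assume "z \<in> set zs"
    with B have "k + 1 + length ys \<le> z" by blast
    with A show "2 ^ (k+1) \<le> z" by linarith
  qed
  have "sorted_wrt (<) zs" using s1 yr(1) zw(1) by (simp add: sorted_wrt_append)
  from W2[OF this C zw(2)] have "2 ^ (2 ^ (k+1)) \<le> length zs" .
  moreover have "length zs \<le> length rest" using yr(1) zw(1) by simp
  ultimately show ?thesis by (rule le_trans)
qed

lemma pow_ineq1: "Suc k \<le> 2 ^ k"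
  by (induction k) auto

lemma pow_ineq2: "k * (k + 1) \<le> (2::nat) ^ (k + 1)"
proof (induction k)
  case 0
  then show ?case by simp
next
  case (Suc k)
  have "Suc k * (Suc k + 1) = k * (k+1) + 2 * (k + 1)" by (simp add: algebra_simps)
  also have "\<dots> \<le> 2 ^ (k+1) + 2 * 2 ^ k" using Suc pow_ineq1[of k] by simp
  also have "\<dots> \<le> 2 ^ (Suc k + 1)" by simp
  finally show ?case .
qed

lemma pow_ineq: "k ^ (k + 1) \<le> (2::nat) ^ (2 ^ (k + 1))"
proof -
  have "k ^ (k + 1) \<le> (2 ^ k) ^ (k + 1)"
    using pow_ineq1[of k] by (intro power_mono) auto
  also have "\<dots> = 2 ^ (k * (k + 1))" by (rule power_mult[symmetric])
  also have "\<dots> \<le> 2 ^ (2 ^ (k + 1))" using pow_ineq2[of k] by (intro power_increasing) auto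
  finally show ?thesis .
qed

definition minhom :: "(nat \<Rightarrow> nat \<Rightarrow> nat) \<Rightarrow> nat set \<Rightarrow> bool" where
  "minhom P Y \<longleftrightarrow> (\<forall>x\<in>Y. \<forall>y\<in>Y. \<forall>z\<in>Y. x < y \<and> y < z \<longrightarrow> P x y = P x z)"

lemma ramsey:
  fixes S :: "nat set"
  assumes "finite S" "\<forall>x\<in>S. \<forall>y\<in>S. x < y \<longrightarrow> P x y < k" "1 \<le> n" "k ^ n \<le> card S" "2 \<le> k"
  shows "\<exists>Y\<subseteq>S. Min S \<in> Y \<and> n \<le> card Y \<and> minhom P Y"
  using assms
proof (induction n arbitrary: S)
  case 0
  then show ?case by simp
next
  case (Suc n)
  show ?case
  proof (cases "n = 0")
    case True
  have "0 < k ^ Suc n" using Suc.prems(5) by simp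
  then have "0 < card S" using Suc.prems(4) by linarith
  then have "S \<noteq> {}" by auto
  then show ?thesis using Suc.prems True
    by (intro exI[of _ "{Min S}"]) (auto simp: minhom_def)
  next
  case False
  then have hyps: "1 \<le> n" by simp
  have "0 < k ^ Suc n" using Suc.prems(5) by simp
  then have "0 < card S" using Suc.prems(4) by linarith
  then have ne: "S \<noteq> {}" by auto
  define s where "s = Min S"
  have sS: "s \<in> S" using ne Suc.prems s_def by auto
  define C where "C c = {y\<in>S - {s}. P s y = c}" for c
  have "\<exists>c<k. k ^ n \<le> card (C c)"
  proof (rule ccontr)
    assume "\<not> ?thesis"
    then have lt: "\<forall>c<k. card (C c) \<le> k ^ n - 1" by auto
    have "S - {s} \<subseteq> (\<Union>c\<in>{..<k}. C c)"
    proof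
      fix y assume y: "y \<in> S - {s}"
      then have "s \<le> y" using s_def Suc.prems(1) by simp
      then have "s < y" using y by auto
      then have "P s y < k" using Suc.prems(2) sS y by blast
      then show "y \<in> (\<Union>c\<in>{..<k}. C c)" using y by (auto simp: C_def)
    qed
    then have "card (S - {s}) \<le> card (\<Union>c\<in>{..<k}. C c)"
      by (intro card_mono) (auto simp: C_def Suc.prems(1))
    also have "\<dots> \<le> (\<Sum>c\<in>{..<k}. card (C c))" by (rule card_UN_le) simp
    also have "\<dots> \<le> (\<Sum>c\<in>{..<k}. k ^ n - 1)" using lt by (intro sum_mono) auto
    also have "\<dots> = k * (k ^ n - 1)" by simp
    finally have a: "card (S - {s}) \<le> k * (k ^ n - 1)" .
    have b: "card (S - {s}) = card S - 1" using sS Suc.prems(1) by simp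
    have "k ^ n \<ge> 1" using Suc.prems by simp
    then have "k * (k ^ n - 1) = k ^ Suc n - k" by (simp add: algebra_simps right_diff_distrib')
    moreover have "k \<le> k ^ Suc n" using Suc.prems(5) by simp
    ultimately show False using a b Suc.prems(4) Suc.prems(5) by linarith
  qed
  then obtain c where c: "c < k" "k ^ n \<le> card (C c)" by blast
  have fC: "finite (C c)" using Suc.prems(1) by (simp add: C_def)
  have "\<forall>x\<in>C c. \<forall>y\<in>C c. x < y \<longrightarrow> P x y < k" using Suc.prems(2) by (auto simp: C_def)
  from Suc.IH[OF fC this _ c(2) Suc.prems(5)] hyps obtain Y' where
    Y': "Y' \<subseteq> C c" "Min (C c) \<in> Y'" "n \<le> card Y'" "minhom P Y'" by auto
  have sY': "s \<notin> Y'" using Y' by (auto simp: C_def)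
  have gt: "\<forall>y\<in>Y'. s < y"
  proof
    fix y assume "y \<in> Y'"
    then have y: "y \<in> S" "y \<noteq> s" using Y'(1) by (auto simp: C_def)
    then have "s \<le> y" using s_def Suc.prems(1) by simp
    with y show "s < y" by simp
  qed
  have fY': "finite Y'" using Y'(1) fC finite_subset by blast
  show ?thesis
  proof (intro exI[of _ "insert s Y'"] conjI)
    show "insert s Y' \<subseteq> S" using Y' sS by (auto simp: C_def)
    show "Min S \<in> insert s Y'" using s_def by simp
    show "Suc n \<le> card (insert s Y')" using sY' fY' Y'(3) by simp
    show "minhom P (insert s Y')"
      unfolding minhom_def
    proof (intro ballI impI)
      fix x y z assume h: "x \<in> insert s Y'" "y \<in> insert s Y'" "z \<in> insert s Y'" "x < y \<and> y < z"
      show "P x y = P x z"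
      proof (cases "x = s")
        case True
        then have "y \<in> Y'" "z \<in> Y'" using h gt by auto
        then show ?thesis using True Y'(1) by (auto simp: C_def)
      next
        case False
        then have "x \<in> Y'" using h by auto
        then have "s < x" using gt by blast
        then have "y \<noteq> s" "z \<noteq> s" using h by auto
        then have "y \<in> Y'" "z \<in> Y'" using h by auto
        then show ?thesis using Y'(4) \<open>x \<in> Y'\<close> h by (auto simp: minhom_def)
      qed
    qed
  qed
qed
  qed

theorem mainTheorem14:
  fixes X :: "nat set"
  assumes "finite X" and "large (omega_pow 3) X" and "Min X > 3"
  shows "fEM_large (omega_pow 1) X"
proof -
  define k where "k = Min X"
  have ne: "X \<noteq> {}" using assms by (auto simp: large_def omega_pow_def)
  have sl: "sorted_list_of_set X = k # sorted_list_of_set (X - {k})"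
    using sorted_list_of_set_nonempty[OF assms(1) ne] k_def by simp
  have st: "sorted_wrt (<) (k # sorted_list_of_set (X - {k}))"
    using sl sorted_list_of_set.strict_sorted_key_list_of_set[of X] by metis
  have "2 ^ (2 ^ (k + 1)) \<le> length (sorted_list_of_set (X - {k}))"
    using W3[OF st] sl assms k_def by (auto simp: large_def omega_pow_def)
  then have "k ^ (k + 1) \<le> card X"
    using pow_ineq[of k] assms(1) sl by (metis length_sorted_list_of_set le_trans length_Cons le_SucI)
  show ?thesis
    unfolding fEM_large_def
  proof (intro conjI allI impI)
    show "finite X" by fact
    fix P :: "nat \<Rightarrow> nat \<Rightarrow> nat"
    assume col: "\<forall>x\<in>X. \<forall>y\<in>X. x < y \<longrightarrow> P x y < Min X"
    obtain Y where Y: "Y \<subseteq> X" "k \<in> Y" "k + 1 \<le> card Y" "minhom P Y"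
      using ramsey[OF assms(1), of P k "k+1"] col k_def assms(3) \<open>k ^ (k + 1) \<le> card X\<close> by auto
    have fY: "finite Y" using Y(1) assms(1) finite_subset by blast
    have mY: "Min Y = k"
      using Y fY k_def assms(1) by (metis Min_antimono Min_le antisym empty_iff)
    have "large (omega_pow 1) Y"
    proof -
      have slY: "sorted_list_of_set Y = k # sorted_list_of_set (Y - {k})"
        using sorted_list_of_set_nonempty[of Y] fY Y mY by auto
      have "k \<le> length (sorted_list_of_set (Y - {k}))" using Y fY by simp
      then show ?thesis using slY fY W0' fund_Suc[of 0 k]
        by (simp add: large_def omega_pow_def)
    qed
    moreover have "fallow_on P Y" using Y(4) by (auto simp: minhom_def fallow_on_def)
    ultimately show "\<exists>Y\<subseteq>X. large (omega_pow 1) Y \<and> fallow_on P Y" using Y(1) by blast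
  qed
qed

end
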